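(* Let $\mathcal C$ be an irredundant 3-SAT formula and let $u,v,w$ be distinct variables. Suppose there are distinct variables $a,b\notin\{u,v,w\}$ with $abu,abv,abw\in\mathcal C$. Then (a) $\bar u\bar v w\notin\mathcal C$; and (b) if $\bar u\bar v\bar w\in\mathcal C$, then there is no variable $c\notin\{u,v,w,a,b\}$ with $abc\in\mathcal C$.
   Context: A clause is a conjunction of three literals on three distinct variables, written as juxtaposition (e.g. $\bar u\bar v w=\bar u\wedge\bar v\wedge w$); a formula is a nonempty set of clauses. $\mathcal C$ is irredundant if every $C\in\mathcal C$ has a witness: an assignment satisfying $C$ and no other clause of $\mathcal C$. *)

theory Defs
  imports Main
begin

type_synonym 'v lit = "'v \<times> bool"

definition pos :: "'v \<Rightarrow> 'v lit" where "pos x = (x, True)"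
definition neg :: "'v \<Rightarrow> 'v lit" where "neg x = (x, False)"

text \<open>A clause: three literals on three distinct variables (read as their conjunction).\<close>
definition is_clause :: "'v lit set \<Rightarrow> bool" where
  "is_clause C \<longleftrightarrow> card C = 3 \<and> card (fst ` C) = 3"

definition sat_lit :: "('v \<Rightarrow> bool) \<Rightarrow> 'v lit \<Rightarrow> bool" where
  "sat_lit \<sigma> l \<longleftrightarrow> \<sigma> (fst l) = snd l"

definition sat_clause :: "('v \<Rightarrow> bool) \<Rightarrow> 'v lit set \<Rightarrow> bool" where
  "sat_clause \<sigma> C \<longleftrightarrow> (\<forall>l\<in>C. sat_lit \<sigma> l)"

definition is_formula :: "'v lit set set \<Rightarrow> bool" where
  "is_formula F \<longleftrightarrow> F \<noteq> {} \<and> finite F \<and> (\<forall>C\<in>F. is_clause C)"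

definition witness :: "'v lit set set \<Rightarrow> 'v lit set \<Rightarrow> ('v \<Rightarrow> bool) \<Rightarrow> bool" where
  "witness F C \<sigma> \<longleftrightarrow> sat_clause \<sigma> C \<and> (\<forall>D\<in>F. D \<noteq> C \<longrightarrow> \<not> sat_clause \<sigma> D)"

definition irredundant :: "'v lit set set \<Rightarrow> bool" where
  "irredundant F \<longleftrightarrow> (\<forall>C\<in>F. \<exists>\<sigma>. witness F C \<sigma>)"

end

theory Submission
  imports Defs
begin

lemma wit_other:
  assumes "witness F C \<sigma>" "D \<in> F" "x \<in> D" "x \<notin> C"
  shows "\<not> sat_clause \<sigma> D"
  using assms unfolding witness_def by blast

lemma wit_self: "witness F C \<sigma> \<Longrightarrow> sat_clause \<sigma> C"
  unfolding witness_def by blast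

lemma sat3: "sat_clause \<sigma> {x, y, z} \<longleftrightarrow> sat_lit \<sigma> x \<and> sat_lit \<sigma> y \<and> sat_lit \<sigma> z"
  unfolding sat_clause_def by simp

lemma slp[simp]: "sat_lit \<sigma> (pos x) = \<sigma> x" "sat_lit \<sigma> (neg x) = (\<not> \<sigma> x)"
  unfolding sat_lit_def pos_def neg_def by auto

lemma pe[simp]: "(pos x = pos y) = (x = y)" "(neg x = neg y) = (x = y)" "pos x \<noteq> neg y" "neg x \<noteq> pos y"
  unfolding pos_def neg_def by auto

theorem mainTheorem8:
  fixes F :: "'v lit set set" and u v w a b :: 'v
  assumes "is_formula F" and "irredundant F"
    and "u \<noteq> v" "u \<noteq> w" "v \<noteq> w"
    and "a \<noteq> b" "a \<notin> {u, v, w}" "b \<notin> {u, v, w}"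
    and "{pos a, pos b, pos u} \<in> F" "{pos a, pos b, pos v} \<in> F" "{pos a, pos b, pos w} \<in> F"
  shows "{neg u, neg v, pos w} \<notin> F \<and>
         ({neg u, neg v, neg w} \<in> F \<longrightarrow>
            \<not> (\<exists>c. c \<notin> {u, v, w, a, b} \<and> {pos a, pos b, pos c} \<in> F))"
proof
  show "{neg u, neg v, pos w} \<notin> F"
  proof
    assume H: "{neg u, neg v, pos w} \<in> F"
    obtain \<sigma> where s: "witness F {pos a, pos b, pos w} \<sigma>"
      using assms(2,11) unfolding irredundant_def by blast
    have sa: "\<sigma> a" "\<sigma> b" "\<sigma> w" using wit_self[OF s] by (simp_all add: sat3)
    have "\<not> sat_clause \<sigma> {pos a, pos b, pos u}"
      by (rule wit_other[OF s assms(9), of "pos u"]) (use assms in auto)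
    hence u: "\<not> \<sigma> u" using sa by (simp add: sat3)
    have "\<not> sat_clause \<sigma> {pos a, pos b, pos v}"
      by (rule wit_other[OF s assms(10), of "pos v"]) (use assms in auto)
    hence v: "\<not> \<sigma> v" using sa by (simp add: sat3)
    have "\<not> sat_clause \<sigma> {neg u, neg v, pos w}"
      by (rule wit_other[OF s H, of "neg u"]) simp_all
    thus False using u v sa by (simp add: sat3)
  qed
next
  show "{neg u, neg v, neg w} \<in> F \<longrightarrow>
            \<not> (\<exists>c. c \<notin> {u, v, w, a, b} \<and> {pos a, pos b, pos c} \<in> F)"
  proof (intro impI notI)
    assume H: "{neg u, neg v, neg w} \<in> F" and "\<exists>c. c \<notin> {u, v, w, a, b} \<and> {pos a, pos b, pos c} \<in> F"
    then obtain c where c: "c \<notin> {u, v, w, a, b}" "{pos a, pos b, pos c} \<in> F" by blast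
    obtain \<sigma> where s: "witness F {pos a, pos b, pos c} \<sigma>"
      using assms(2) c(2) unfolding irredundant_def by blast
    have sa: "\<sigma> a" "\<sigma> b" "\<sigma> c" using wit_self[OF s] by (simp_all add: sat3)
    have "\<not> sat_clause \<sigma> {pos a, pos b, pos u}"
      by (rule wit_other[OF s assms(9), of "pos u"]) (use assms c in auto)
    hence u: "\<not> \<sigma> u" using sa by (simp add: sat3)
    have "\<not> sat_clause \<sigma> {pos a, pos b, pos v}"
      by (rule wit_other[OF s assms(10), of "pos v"]) (use assms c in auto)
    hence v: "\<not> \<sigma> v" using sa by (simp add: sat3)
    have "\<not> sat_clause \<sigma> {pos a, pos b, pos w}"
      by (rule wit_other[OF s assms(11), of "pos w"]) (use assms c in auto)
    hence w: "\<not> \<sigma> w" using sa by (simp add: sat3)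
    have "\<not> sat_clause \<sigma> {neg u, neg v, neg w}"
      by (rule wit_other[OF s H, of "neg u"]) simp_all
    thus False using u v w by (simp add: sat3)
  qed
qed

end
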